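(* Let $F\in\mathbb{R}^{K\times n}$ be a class indicator matrix, let $W\in\mathbb{R}^{r\times n}$ ($r\le n$) be an entrywise nonnegative similarity matrix with all column sums positive, $S=\operatorname{diag}(\mathbf{1}^TW)$, and $\tilde W=WS^{-1}$. Assume $\tilde W$ has full row rank $r$ and let $X^*=F\tilde W^T(\tilde W\tilde W^T)^{-1}$. Then each column of $X^*$ sums to one: $\mathbf{1}^TX^*=\mathbf{1}^T$.
   Context: $\mathbf{1}$ denotes the all-ones vector of appropriate length. The columns of $F$ are standard basis vectors $e_k\in\mathbb{R}^K$, $F_j=e_k$ meaning training sample $j$ is in class $k$. $W_{ij}$ is the similarity (e.g. a Gaussian kernel value $\exp\{-\|G_i-A_j\|_2^2/(2\sigma^2)\}$) between the $i$th basis vector $G_i$ and the $j$th training sample $A_j$; thus each column of $\tilde W$ sums to one. $X^*$ is the minimizer of the normalized RBF network objective $\|F-X\tilde W\|_F^2$. *)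

theory Defs
  imports "HOL-Analysis.Analysis"
begin

definition colsum_diag :: "real^'n^'r \<Rightarrow> real^'n^'n" where
  "colsum_diag W = (\<chi> i j. if i = j then (\<Sum>l\<in>UNIV. W $ l $ j) else 0)"

end

theory Submission
  imports Defs
begin

lemma inv_right_aux:
  fixes A :: "real^'n^'n"
  assumes "invertible A"
  shows "A ** matrix_inv A = mat 1"
proof -
  have "\<exists>A'. A ** A' = mat 1 \<and> A' ** A = mat 1" using assms by (simp add: invertible_def)
  from someI_ex[OF this] show ?thesis unfolding matrix_inv_def by blast
qed

theorem lemma1:
  fixes F :: "real^'n^'k" and W :: "real^'n^'r"
  assumes indicator: "\<forall>j. \<exists>k. column j F = axis k 1"
    and r_le_n: "CARD('r) \<le> CARD('n)"
    and nonneg: "\<forall>i j. W $ i $ j \<ge> 0"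
    and colpos: "\<forall>j. (\<Sum>i\<in>UNIV. W $ i $ j) > 0"
    and full_rank: "rank (W ** matrix_inv (colsum_diag W)) = CARD('r)"
  shows "(\<chi> i. 1) v* (F ** transpose (W ** matrix_inv (colsum_diag W))
           ** matrix_inv ((W ** matrix_inv (colsum_diag W))
                          ** transpose (W ** matrix_inv (colsum_diag W))))
         = (\<chi> j. 1)"
proof -
  define S where "S = colsum_diag W"
  define T where "T = W ** matrix_inv S"
  define G where "G = T ** transpose T"
  define s where "s = (\<lambda>j. \<Sum>i\<in>UNIV. W $ i $ j)"
  define D :: "real^'n^'n" where "D = (\<chi> i j. if i = j then 1 / s j else 0)"
  have spos: "s j \<noteq> 0" for j using colpos s_def by (metis less_irrefl)
  have SD: "S ** D = mat 1"
  proof -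
    have "(S ** D) $ i $ j = mat 1 $ i $ j" for i j
    proof -
      have "(S ** D) $ i $ j = (\<Sum>l\<in>UNIV. (if i = l then s l else 0) * (if l = j then 1 / s j else 0))"
        unfolding D_def s_def by (simp add: matrix_matrix_mult_def S_def colsum_diag_def)
      also have "\<dots> = (if i = j then 1 else 0)"
      proof -
        have "(\<lambda>l. (if i = l then s l else 0) * (if l = j then 1 / s j else 0))
              = (\<lambda>l. if l = j then (if i = j then 1 else 0) else 0)"
          using spos by (auto intro!: ext)
        then show ?thesis by (simp only:) (cases "i = j"; simp)
      qed
      finally show ?thesis by (simp add: mat_def)
    qed
    then show ?thesis by (simp add: vec_eq_iff)
  qed
  have invS: "invertible S" using SD invertible_right_inverse by blast
  have SSi: "S ** matrix_inv S = mat 1" by (rule inv_right_aux[OF invS])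
  have oneW: "(\<chi> i. (1::real)) v* W = (\<chi> j. 1) v* S"
  proof -
    have "((\<chi> i. (1::real)) v* W) $ j = ((\<chi> j. 1) v* S) $ j" for j
    proof -
      have "((\<chi> j. (1::real)) v* S) $ j = (\<Sum>l\<in>UNIV. (if l = j then s j else 0))"
        by (simp add: vector_matrix_mult_def S_def colsum_diag_def s_def)
      also have "\<dots> = s j" by simp
      finally show ?thesis by (simp add: vector_matrix_mult_def s_def)
    qed
    then show ?thesis by (simp add: vec_eq_iff)
  qed
  have oneT: "(\<chi> i. (1::real)) v* T = (\<chi> j. 1)"
    by (simp add: T_def vector_matrix_mul_assoc[symmetric] oneW)
       (simp add: vector_matrix_mul_assoc SSi)
  have oneF: "(\<chi> i. (1::real)) v* F = (\<chi> j. 1)"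
  proof -
    have "((\<chi> i. (1::real)) v* F) $ j = 1" for j
    proof -
      obtain k where k: "column j F = axis k 1" using indicator by blast
      have "((\<chi> i. (1::real)) v* F) $ j = (\<Sum>i\<in>UNIV. column j F $ i)"
        by (simp add: vector_matrix_mult_def column_def)
      also have "\<dots> = 1" using k by (simp add: axis_def)
      finally show ?thesis .
    qed
    then show ?thesis by (simp add: vec_eq_iff)
  qed
  have injTt: "inj ((*v) (transpose T))"
    using full_rank full_rank_injective[of "transpose T"] rank_transpose[of T]
    by (simp add: T_def S_def)
  have kerG: "\<forall>x. G *v x = 0 \<longrightarrow> x = 0"
  proof (intro allI impI)
    fix x assume gx: "G *v x = 0"
    have "inner x (G *v x) = inner (x v* T) (transpose T *v x)"
      by (simp add: G_def matrix_vector_mul_assoc[symmetric] dot_lmul_matrix)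
    also have "\<dots> = inner (x v* T) (x v* T)" by simp
    finally have "inner (x v* T) (x v* T) = 0" using gx by simp
    then have "transpose T *v x = 0" by simp
    then have "transpose T *v x = transpose T *v 0" by simp
    then show "x = 0" using injTt by (meson injD)
  qed
  have invG: "invertible G"
    using kerG matrix_left_invertible_ker invertible_left_inverse by blast
  have GGi: "G ** matrix_inv G = mat 1" by (rule inv_right_aux[OF invG])
  have "(\<chi> i. (1::real)) v* (F ** transpose T ** matrix_inv G)
        = (((\<chi> i. (1::real)) v* F) v* transpose T) v* matrix_inv G"
    by (simp only: vector_matrix_mul_assoc matrix_mul_assoc)
  also have "\<dots> = (((\<chi> i. (1::real)) v* T) v* transpose T) v* matrix_inv G"
    by (simp add: oneF oneT)
  also have "\<dots> = (\<chi> i. (1::real)) v* (G ** matrix_inv G)"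
    by (simp only: vector_matrix_mul_assoc G_def matrix_mul_assoc)
  also have "\<dots> = (\<chi> i. 1)" by (simp add: GGi)
  finally show ?thesis by (simp add: T_def G_def S_def)
qed

end
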